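(* Let $f:\mathbb{R}^n\times\mathbb{R}^m\to\mathbb{R}$ be twice continuously differentiable, $\mu$-strongly convex in $x$ and $\mu$-strongly concave in $y$ ($\mu>0$), with the largest singular value of $\nabla F(z)$ at most $L$ for all $z$ and $\|\nabla F(z)-\nabla F(z')\|\le L_2\|z-z'\|$, where $z=(x;y)$ and $F(z)=(\nabla_x f(x,y);-\nabla_y f(x,y))$. Let $m(z)=\frac12\|F(z)\|^2$, and for a starting point $z^0$ let $D=\max\{\|z-z^0\|: m(z)\le m(z^0)\}$ and $L_m=L^2+L_2LD$. Let $\{z^k\}$ be generated by the CRN-SPP method (described in the context) with constant stepsize $\alpha=\frac{\mu^2}{2L_m}<1$. Then for every $k$, $$m(z^{k+1})-m(z^k)\le-\frac{\mu^4}{8L_m}\|d^k\|^2.$$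
   Context: CRN-SPP with parameters $\bar\gamma>0$, $\rho,\alpha\in(0,1)$: at iterate $z^k=(x^k;y^k)$ let $g^k=\nabla f(z^k)$, $H^k=\nabla^2 f(z^k)$ and for $\gamma>0$ define $f_k(x,y;\gamma)=f(z^k)+\langle g^k,z-z^k\rangle+\frac12(z-z^k)^\top H^k(z-z^k)+\frac{\gamma}{3}\|x-x^k\|^3-\frac{\gamma}{3}\|y-y^k\|^3$. Set $\gamma^k=\bar\gamma$, compute the saddle point $(\tilde x,\tilde y)$ of $\min_x\max_y f_k(x,y;\gamma^k)$, and let $u^k=\tilde x-x^k$, $v^k=\tilde y-y^k$; while $\gamma^k(\|u^k\|+\|v^k\|)>\mu$, replace $\gamma^k$ by $\rho\gamma^k$ and recompute. Set $d^k=(u^k;v^k)$, and $z^{k+1}=z^k+\alpha d^k$ if $m(z^k+\alpha d^k)<m(z^k+d^k)$, otherwise $z^{k+1}=z^k+d^k$. Norms: Euclidean for vectors, largest singular value for matrices. *)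

theory Defs
  imports "HOL-Analysis.Analysis"
begin

text \<open>Points z = (x;y) of R^n x R^m are pairs; the norm on the product type is the
Euclidean norm sqrt(|x|^2 + |y|^2). Bounded linear maps are blinfun, whose norm is the
operator norm (= largest singular value).\<close>

definition saddle_field ::
  "('n::euclidean_space \<times> 'm::euclidean_space \<Rightarrow> 'n \<times> 'm) \<Rightarrow> 'n \<times> 'm \<Rightarrow> 'n \<times> 'm" where
  "saddle_field g z = (fst (g z), - snd (g z))"

definition merit :: "('a \<Rightarrow> 'b::real_normed_vector) \<Rightarrow> 'a \<Rightarrow> real" where
  "merit F z = (1/2) * (norm (F z))^2"

text \<open>Cubic-regularized second-order model f_k(x', y'; gamma) at the iterate zk, where
fz = f(zk), gz = grad f(zk), Hz = Hessian of f at zk (as a linear map).\<close>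
definition crn_model ::
  "real \<Rightarrow> ('n::euclidean_space \<times> 'm::euclidean_space)
     \<Rightarrow> (('n \<times> 'm) \<Rightarrow>\<^sub>L ('n \<times> 'm)) \<Rightarrow> ('n \<times> 'm) \<Rightarrow> real \<Rightarrow> 'n \<Rightarrow> 'm \<Rightarrow> real" where
  "crn_model fz gz Hz zk \<gamma> x' y' =
     fz + inner gz ((x', y') - zk) + (1/2) * inner ((x', y') - zk) (blinfun_apply Hz ((x', y') - zk))
     + (\<gamma>/3) * norm (x' - fst zk) ^ 3 - (\<gamma>/3) * norm (y' - snd zk) ^ 3"

definition is_saddle_point :: "('n \<Rightarrow> 'm \<Rightarrow> real) \<Rightarrow> 'n \<Rightarrow> 'm \<Rightarrow> bool" where
  "is_saddle_point \<phi> xt yt \<longleftrightarrow> (\<forall>x y. \<phi> xt y \<le> \<phi> xt yt \<and> \<phi> xt yt \<le> \<phi> x yt)"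

definition crn_step ::
  "(('n::euclidean_space \<times> 'm::euclidean_space) \<Rightarrow> real) \<Rightarrow> ('n \<times> 'm \<Rightarrow> 'n \<times> 'm)
     \<Rightarrow> ('n \<times> 'm \<Rightarrow> ('n \<times> 'm) \<Rightarrow>\<^sub>L ('n \<times> 'm)) \<Rightarrow> ('n \<times> 'm) \<Rightarrow> real \<Rightarrow> ('n \<times> 'm) \<Rightarrow> bool" where
  "crn_step f g H zk \<gamma> d \<longleftrightarrow>
     is_saddle_point (crn_model (f zk) (g zk) (H zk) zk \<gamma>) (fst (zk + d)) (snd (zk + d))"

text \<open>The sequences z (iterates) and d (directions) are generated by CRN-SPP with parameters
gbar, rho, alpha and threshold mu: at step k the accepted regularization is gbar * rho^j where
j is the first backtracking index with gamma (|u|+|v|) <= mu (all earlier trial steps violate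
the test), d k is the step for that gamma, and then the stepsize alpha or 1 is chosen.\<close>
definition crn_spp_sequence ::
  "(('n::euclidean_space \<times> 'm::euclidean_space) \<Rightarrow> real) \<Rightarrow> ('n \<times> 'm \<Rightarrow> 'n \<times> 'm)
     \<Rightarrow> ('n \<times> 'm \<Rightarrow> ('n \<times> 'm) \<Rightarrow>\<^sub>L ('n \<times> 'm)) \<Rightarrow> real \<Rightarrow> real \<Rightarrow> real \<Rightarrow> real
     \<Rightarrow> (nat \<Rightarrow> 'n \<times> 'm) \<Rightarrow> (nat \<Rightarrow> 'n \<times> 'm) \<Rightarrow> bool" where
  "crn_spp_sequence f g H gbar \<rho> \<alpha> \<mu> z d \<longleftrightarrow>
     (\<forall>k. (\<exists>j::nat.
            (\<forall>i<j. \<forall>d'. crn_step f g H (z k) (gbar * \<rho> ^ i) d' \<longrightarrow>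
                 gbar * \<rho> ^ i * (norm (fst d') + norm (snd d')) > \<mu>)
          \<and> crn_step f g H (z k) (gbar * \<rho> ^ j) (d k)
          \<and> gbar * \<rho> ^ j * (norm (fst (d k)) + norm (snd (d k))) \<le> \<mu>)
        \<and> z (Suc k) =
            (if merit (saddle_field g) (z k + \<alpha> *\<^sub>R d k) < merit (saddle_field g) (z k + d k)
             then z k + \<alpha> *\<^sub>R d k else z k + d k))"

end

theory Submission
  imports Defs
begin



lemma line_deriv:
  fixes F :: "'a::real_normed_vector \<Rightarrow> real"
  assumes "(F has_derivative F') (at (x + s *\<^sub>R v))"
  shows "((\<lambda>s. F (x + s *\<^sub>R v)) has_field_derivative F' v) (at s)"
proof -
  have l: "linear F'" using assms has_derivative_linear by blast
  have "((\<lambda>s. x + s *\<^sub>R v) has_derivative (\<lambda>s. s *\<^sub>R v)) (at s)"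
    by (intro derivative_eq_intros) auto
  from has_derivative_compose[OF this assms]
  have "((\<lambda>s. F (x + s *\<^sub>R v)) has_derivative (\<lambda>s. F' (s *\<^sub>R v))) (at s)" .
  moreover have "(\<lambda>s. F' (s *\<^sub>R v)) = (*) (F' v)"
    using l by (auto simp: fun_eq_iff linear_scale)
  ultimately show ?thesis by (simp add: has_field_derivative_def)
qed

lemma mixed_mvt:
  fixes f :: "'a::real_inner \<Rightarrow> real" and g :: "'a \<Rightarrow> 'a" and H :: "'a \<Rightarrow> 'a \<Rightarrow>\<^sub>L 'a"
  assumes grad: "\<And>w. (f has_derivative (\<lambda>h. inner (g w) h)) (at w)"
   and hess: "\<And>w. (g has_derivative blinfun_apply (H w)) (at w)"
   and t: "t > 0"
  shows "\<exists>p. norm (p - w) \<le> t * (norm a + norm b) \<and>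
     f (w + t *\<^sub>R a + t *\<^sub>R b) - f (w + t *\<^sub>R a) - f (w + t *\<^sub>R b) + f w = t^2 * inner a (H p b)"
proof -
  define \<phi> where "\<phi> s = f (w + t *\<^sub>R b + s *\<^sub>R a) - f (w + s *\<^sub>R a)" for s
  have d\<phi>: "(\<phi> has_field_derivative (inner (g (w + t *\<^sub>R b + s *\<^sub>R a)) a - inner (g (w + s *\<^sub>R a)) a)) (at s)" for s
    unfolding \<phi>_def
    by (intro DERIV_diff line_deriv grad)
  obtain \<xi> where \<xi>: "0 < \<xi>" "\<xi> < t" "\<phi> t - \<phi> 0 = (t - 0) * (inner (g (w + t *\<^sub>R b + \<xi> *\<^sub>R a)) a - inner (g (w + \<xi> *\<^sub>R a)) a)"
    using MVT2[OF t, of \<phi> "\<lambda>s. inner (g (w + t *\<^sub>R b + s *\<^sub>R a)) a - inner (g (w + s *\<^sub>R a)) a"] d\<phi> by blast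
  define \<psi> where "\<psi> r = inner (g (w + \<xi> *\<^sub>R a + r *\<^sub>R b)) a" for r
  have d\<psi>: "(\<psi> has_field_derivative inner (H (w + \<xi> *\<^sub>R a + r *\<^sub>R b) b) a) (at r)" for r
  proof -
    have "((\<lambda>x. inner (g x) a) has_derivative (\<lambda>h. inner (H (w + \<xi> *\<^sub>R a + r *\<^sub>R b) h) a)) (at (w + \<xi> *\<^sub>R a + r *\<^sub>R b))"
      by (rule derivative_eq_intros hess | simp)+
    then show ?thesis unfolding \<psi>_def by (rule line_deriv)
  qed
  obtain \<eta> where \<eta>: "0 < \<eta>" "\<eta> < t" "\<psi> t - \<psi> 0 = (t - 0) * inner (H (w + \<xi> *\<^sub>R a + \<eta> *\<^sub>R b) b) a"
    using MVT2[OF t, of \<psi> "\<lambda>r. inner (H (w + \<xi> *\<^sub>R a + r *\<^sub>R b) b) a"] d\<psi> by blast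
  define p where "p = w + \<xi> *\<^sub>R a + \<eta> *\<^sub>R b"
  have "norm (p - w) \<le> norm (\<xi> *\<^sub>R a) + norm (\<eta> *\<^sub>R b)"
    unfolding p_def by (metis add_diff_cancel_left' add.assoc norm_triangle_ineq)
  also have "\<dots> \<le> t * norm a + t * norm b"
    using \<xi> \<eta> by (intro add_mono) (auto intro!: mult_right_mono)
  finally have n: "norm (p - w) \<le> t * (norm a + norm b)" by (simp add: algebra_simps)
  have "f (w + t *\<^sub>R a + t *\<^sub>R b) - f (w + t *\<^sub>R a) - f (w + t *\<^sub>R b) + f w = \<phi> t - \<phi> 0"
    unfolding \<phi>_def by (simp add: algebra_simps)
  also have "\<dots> = t * (\<psi> t - \<psi> 0)"
    using \<xi>(3) unfolding \<psi>_def by (simp add: algebra_simps inner_diff_left)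
  also have "\<dots> = t^2 * inner a (H p b)"
    using \<eta>(3) unfolding p_def by (simp add: power2_eq_square inner_commute)
  finally show ?thesis using n by blast
qed

lemma inner_blinfun_bound:
  fixes M :: "'a::real_inner \<Rightarrow>\<^sub>L 'b::real_inner"
  shows "\<bar>inner c (M b)\<bar> \<le> norm c * norm M * norm b"
proof -
  have "\<bar>inner c (M b)\<bar> \<le> norm c * norm (M b)" by (rule Cauchy_Schwarz_ineq2)
  also have "\<dots> \<le> norm c * (norm M * norm b)"
    by (intro mult_left_mono norm_blinfun) auto
  finally show ?thesis by (simp add: mult.assoc)
qed

lemma hess_sym:
  fixes f :: "'a::real_inner \<Rightarrow> real" and g :: "'a \<Rightarrow> 'a" and H :: "'a \<Rightarrow> 'a \<Rightarrow>\<^sub>L 'a"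
  assumes grad: "\<And>w. (f has_derivative (\<lambda>h. inner (g w) h)) (at w)"
   and hess: "\<And>w. (g has_derivative blinfun_apply (H w)) (at w)"
   and cont: "continuous_on UNIV H"
  shows "inner a (H w b) = inner b (H w a)"
proof -
  define X where "X = inner a (H w b)"
  define Y where "Y = inner b (H w a)"
  have bnd: "\<bar>X - Y\<bar> \<le> 2 * e * (norm a * norm b)" if e: "e > 0" for e
  proof -
    from cont e obtain \<delta> where \<delta>: "\<delta> > 0" "\<And>p. dist p w < \<delta> \<Longrightarrow> dist (H p) (H w) < e"
      unfolding continuous_on_iff by (metis UNIV_I)
    define t where "t = \<delta> / (2 * (norm a + norm b + 1))"
    have P: "2 * (norm a + norm b + 1) > 0" by (smt (verit) norm_ge_zero)
    then have t0: "t > 0" using \<delta> unfolding t_def by (intro divide_pos_pos)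
    have "t * (norm a + norm b) < t * (2 * (norm a + norm b + 1))"
      using t0 by (intro mult_strict_left_mono) (smt (verit) norm_ge_zero)+
    also have "\<dots> = \<delta>" unfolding t_def using P by (simp del: mult_pos_pos)
    finally have tl: "t * (norm a + norm b) < \<delta>" .
    obtain p where p: "norm (p - w) \<le> t * (norm a + norm b)"
      "f (w + t *\<^sub>R a + t *\<^sub>R b) - f (w + t *\<^sub>R a) - f (w + t *\<^sub>R b) + f w = t^2 * inner a (H p b)"
      using mixed_mvt[OF grad hess t0, of w a b] by blast
    obtain q where q: "norm (q - w) \<le> t * (norm b + norm a)"
      "f (w + t *\<^sub>R b + t *\<^sub>R a) - f (w + t *\<^sub>R b) - f (w + t *\<^sub>R a) + f w = t^2 * inner b (H q a)"
      using mixed_mvt[OF grad hess t0, of w b a] by blast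
    have "w + t *\<^sub>R b + t *\<^sub>R a = w + t *\<^sub>R a + t *\<^sub>R b" by (simp add: algebra_simps)
    with p(2) q(2) have "t^2 * inner a (H p b) = t^2 * inner b (H q a)" by (smt (verit))
    then have eq: "inner a (H p b) = inner b (H q a)" using t0 by simp
    have dp: "dist (H p) (H w) < e" using p(1) tl \<delta>(2)[of p] by (simp add: dist_norm)
    have dq: "dist (H q) (H w) < e" using q(1) tl \<delta>(2)[of q] by (simp add: dist_norm add.commute)
    have "\<bar>inner a (H p b) - X\<bar> = \<bar>inner a ((H p - H w) b)\<bar>"
      unfolding X_def by (simp add: blinfun.diff_left inner_diff_right)
    also have "\<dots> \<le> norm a * norm (H p - H w) * norm b" by (rule inner_blinfun_bound)
    also have "\<dots> \<le> norm a * e * norm b"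
      using dp by (intro mult_right_mono mult_left_mono) (auto simp: dist_norm)
    finally have 1: "\<bar>inner a (H p b) - X\<bar> \<le> e * (norm a * norm b)" by (simp add: ac_simps)
    have "\<bar>inner b (H q a) - Y\<bar> = \<bar>inner b ((H q - H w) a)\<bar>"
      unfolding Y_def by (simp add: blinfun.diff_left inner_diff_right)
    also have "\<dots> \<le> norm b * norm (H q - H w) * norm a" by (rule inner_blinfun_bound)
    also have "\<dots> \<le> norm b * e * norm a"
      using dq by (intro mult_right_mono mult_left_mono) (auto simp: dist_norm)
    finally have 2: "\<bar>inner b (H q a) - Y\<bar> \<le> e * (norm a * norm b)" by (simp add: ac_simps)
    show ?thesis using 1 2 eq by linarith
  qed
  show ?thesis
  proof (rule ccontr)
    assume "\<not> ?thesis"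
    then have ne: "\<bar>X - Y\<bar> > 0" unfolding X_def Y_def by simp
    define e where "e = \<bar>X - Y\<bar> / (4 * (norm a * norm b + 1))"
    have P: "4 * (norm a * norm b + 1) > 0" by (smt (verit) norm_ge_zero mult_nonneg_nonneg)
    have e0: "e > 0" using ne P unfolding e_def by (intro divide_pos_pos)
    have "2 * e * (norm a * norm b) \<le> 2 * e * (norm a * norm b + 1)"
      using e0 by simp
    also have "\<dots> = \<bar>X - Y\<bar> / 2" unfolding e_def using P by (simp add: field_simps)
    finally have "\<bar>X - Y\<bar> \<le> \<bar>X - Y\<bar> / 2" using bnd[OF e0] by (rule order_trans[rotated])
    then show False using ne by simp
  qed
qed

lemma convex_grad_ineq:
  fixes \<phi> :: "'a::real_normed_vector \<Rightarrow> real"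
  assumes cv: "convex_on UNIV \<phi>" and d: "(\<phi> has_derivative \<phi>') (at x)"
  shows "\<phi> y \<ge> \<phi> x + \<phi>' (y - x)"
proof -
  define v where "v = y - x"
  define \<psi> where "\<psi> t = \<phi> (x + t *\<^sub>R v)" for t
  have "convex_on UNIV \<psi>"
  proof (rule convex_onI)
    fix t a b :: real assume t: "t > 0" "t < 1"
    have "x + ((1 - t) *\<^sub>R a + t *\<^sub>R b) *\<^sub>R v = (1 - t) *\<^sub>R (x + a *\<^sub>R v) + t *\<^sub>R (x + b *\<^sub>R v)"
      by (simp add: algebra_simps)
    then show "\<psi> ((1 - t) *\<^sub>R a + t *\<^sub>R b) \<le> (1 - t) * \<psi> a + t * \<psi> b"
      unfolding \<psi>_def using convex_onD[OF cv, of t "x + a *\<^sub>R v" "x + b *\<^sub>R v"] t by simp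
  qed simp
  moreover have "(\<psi> has_field_derivative \<phi>' v) (at 0 within UNIV)"
    unfolding \<psi>_def by (rule line_deriv) (simp add: d)
  ultimately have "\<psi> 1 - \<psi> 0 \<ge> \<phi>' v * (1 - 0)"
    by (intro convex_on_imp_above_tangent[where A = UNIV]) auto
  then show ?thesis unfolding \<psi>_def v_def by simp
qed

lemma partial_x_deriv:
  fixes f :: "'x::euclidean_space \<times> 'y::euclidean_space \<Rightarrow> real"
  assumes grad: "\<And>w. (f has_derivative (\<lambda>h. inner (g w) h)) (at w)"
  shows "((\<lambda>x. f (x, y)) has_derivative (\<lambda>h. inner (fst (g (x, y))) h)) (at x)"
proof -
  have "((\<lambda>x. (x, y)) has_derivative (\<lambda>h. (h, 0))) (at x)"
    by (intro derivative_eq_intros) auto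
  from has_derivative_compose[OF this grad]
  show ?thesis by (simp add: inner_Pair_0)
qed

lemma partial_y_deriv:
  fixes f :: "'x::euclidean_space \<times> 'y::euclidean_space \<Rightarrow> real"
  assumes grad: "\<And>w. (f has_derivative (\<lambda>h. inner (g w) h)) (at w)"
  shows "((\<lambda>y. f (x, y)) has_derivative (\<lambda>h. inner (snd (g (x, y))) h)) (at y)"
proof -
  have "((\<lambda>y. (x, y)) has_derivative (\<lambda>h. (0, h))) (at y)"
    by (intro derivative_eq_intros) auto
  from has_derivative_compose[OF this grad]
  show ?thesis by (simp add: inner_Pair_0)
qed

lemma strong_x:
  fixes f :: "'x::euclidean_space \<times> 'y::euclidean_space \<Rightarrow> real"
  assumes grad: "\<And>w. (f has_derivative (\<lambda>h. inner (g w) h)) (at w)"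
    and sc: "convex_on UNIV (\<lambda>x. f (x, y) - (\<mu> / 2) * (norm x)^2)"
  shows "f (x', y) \<ge> f (x, y) + inner (fst (g (x, y))) (x' - x) + (\<mu>/2) * norm (x' - x)^2"
proof -
  have e: "(\<lambda>x. f (x, y) - (\<mu> / 2) * (norm x)^2) = (\<lambda>x. f (x, y) - (\<mu> / 2) * inner x x)"
    by (simp add: power2_norm_eq_inner)
  have "((\<lambda>x. f (x, y) - (\<mu> / 2) * inner x x) has_derivative
      (\<lambda>h. inner (fst (g (x, y))) h - (\<mu> / 2) * (inner x h + inner h x))) (at x)"
    by (rule derivative_eq_intros partial_x_deriv[OF grad] | simp)+
  from convex_grad_ineq[OF sc[unfolded e] this, of x']
  have "f (x', y) - \<mu> / 2 * (x' \<bullet> x') \<ge> f (x, y) - \<mu> / 2 * (x \<bullet> x) + (fst (g (x, y)) \<bullet> (x' - x) - \<mu> / 2 * (x \<bullet> (x' - x) + (x' - x) \<bullet> x))"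
    by simp
  then have F2: "f (x', y) - \<mu> / 2 * (x' \<bullet> x') \<ge> f (x, y) - \<mu> / 2 * (x \<bullet> x) + (fst (g (x, y)) \<bullet> (x' - x) - \<mu> * (x \<bullet> x') + \<mu> * (x \<bullet> x))"
    by (simp add: inner_diff_left inner_diff_right inner_commute algebra_simps)
  have "norm (x' - x)^2 = x' \<bullet> x' - 2 * (x \<bullet> x') + x \<bullet> x"
    by (simp add: power2_norm_eq_inner inner_diff_left inner_diff_right inner_commute)
  then have C: "\<mu>/2 * norm (x' - x)^2 = \<mu>/2 * (x' \<bullet> x') - \<mu> * (x \<bullet> x') + \<mu>/2 * (x \<bullet> x)"
    by (simp only:) (simp add: algebra_simps)
  show ?thesis using F2 C by linarith
qed

lemma strong_y:
  fixes f :: "'x::euclidean_space \<times> 'y::euclidean_space \<Rightarrow> real"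
  assumes grad: "\<And>w. (f has_derivative (\<lambda>h. inner (g w) h)) (at w)"
    and sc: "convex_on UNIV (\<lambda>y. - f (x, y) - (\<mu> / 2) * (norm y)^2)"
  shows "- f (x, y') \<ge> - f (x, y) - inner (snd (g (x, y))) (y' - y) + (\<mu>/2) * norm (y' - y)^2"
proof -
  have e: "(\<lambda>y. - f (x, y) - (\<mu> / 2) * (norm y)^2) = (\<lambda>y. - f (x, y) - (\<mu> / 2) * inner y y)"
    by (simp add: power2_norm_eq_inner)
  have "((\<lambda>y. - f (x, y) - (\<mu> / 2) * inner y y) has_derivative
      (\<lambda>h. - inner (snd (g (x, y))) h - (\<mu> / 2) * (inner y h + inner h y))) (at y)"
    by (rule derivative_eq_intros partial_y_deriv[OF grad] | simp)+
  from convex_grad_ineq[OF sc[unfolded e] this, of y']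
  have "- f (x, y') - \<mu> / 2 * (y' \<bullet> y') \<ge> - f (x, y) - \<mu> / 2 * (y \<bullet> y) + (- (snd (g (x, y)) \<bullet> (y' - y)) - \<mu> / 2 * (y \<bullet> (y' - y) + (y' - y) \<bullet> y))"
    by simp
  then have F2: "- f (x, y') - \<mu> / 2 * (y' \<bullet> y') \<ge> - f (x, y) - \<mu> / 2 * (y \<bullet> y) + (- (snd (g (x, y)) \<bullet> (y' - y)) - \<mu> * (y \<bullet> y') + \<mu> * (y \<bullet> y))"
    by (simp add: inner_diff_left inner_diff_right inner_commute algebra_simps)
  have "norm (y' - y)^2 = y' \<bullet> y' - 2 * (y \<bullet> y') + y \<bullet> y"
    by (simp add: power2_norm_eq_inner inner_diff_left inner_diff_right inner_commute)
  then have C: "\<mu>/2 * norm (y' - y)^2 = \<mu>/2 * (y' \<bullet> y') - \<mu> * (y \<bullet> y') + \<mu>/2 * (y \<bullet> y)"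
    by (simp only:) (simp add: algebra_simps)
  show ?thesis using F2 C by linarith
qed

lemma F_strong_mono:
  fixes f :: "'x::euclidean_space \<times> 'y::euclidean_space \<Rightarrow> real"
  assumes grad: "\<And>w. (f has_derivative (\<lambda>h. inner (g w) h)) (at w)"
    and scx: "\<And>y. convex_on UNIV (\<lambda>x. f (x, y) - (\<mu> / 2) * (norm x)^2)"
    and scy: "\<And>x. convex_on UNIV (\<lambda>y. - f (x, y) - (\<mu> / 2) * (norm y)^2)"
  shows "inner (saddle_field g z' - saddle_field g z) (z' - z) \<ge> \<mu> * norm (z' - z)^2"
proof -
  obtain x y where z: "z = (x, y)" by fastforce
  obtain x' y' where z': "z' = (x', y')" by fastforce
  have 1: "f (x', y) \<ge> f (x, y) + inner (fst (g (x, y))) (x' - x) + (\<mu>/2) * norm (x' - x)^2"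
    by (rule strong_x[OF grad scx])
  have 2: "f (x, y') \<ge> f (x', y') + inner (fst (g (x', y'))) (x - x') + (\<mu>/2) * norm (x - x')^2"
    by (rule strong_x[OF grad scx])
  have 3: "- f (x, y') \<ge> - f (x, y) - inner (snd (g (x, y))) (y' - y) + (\<mu>/2) * norm (y' - y)^2"
    by (rule strong_y[OF grad scy])
  have 4: "- f (x', y) \<ge> - f (x', y') - inner (snd (g (x', y'))) (y - y') + (\<mu>/2) * norm (y - y')^2"
    by (rule strong_y[OF grad scy])
  have n: "norm (z' - z)^2 = norm (x' - x)^2 + norm (y' - y)^2"
    unfolding z z' by (simp add: norm_Pair)
  have nx: "norm (x - x') = norm (x' - x)" by (rule norm_minus_commute)
  have ny: "norm (y - y') = norm (y' - y)" by (rule norm_minus_commute)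
  have "inner (saddle_field g z' - saddle_field g z) (z' - z)
     = inner (fst (g (x', y')) - fst (g (x, y))) (x' - x) - inner (snd (g (x', y')) - snd (g (x, y))) (y' - y)"
    unfolding z z' saddle_field_def by (simp add: inner_Pair algebra_simps)
  also have "\<dots> = - (inner (fst (g (x, y))) (x' - x) + inner (fst (g (x', y'))) (x - x')
      - inner (snd (g (x, y))) (y' - y) - inner (snd (g (x', y'))) (y - y'))"
    by (simp add: inner_diff_left inner_diff_right algebra_simps)
  finally show ?thesis using 1 2 3 4 n nx ny by (simp add: algebra_simps)
qed

lemma mono_deriv_quad:
  fixes F :: "'a::real_inner \<Rightarrow> 'a"
  assumes d: "(F has_derivative blinfun_apply J) (at w)"
    and mono: "\<And>z z'. inner (F z' - F z) (z' - z) \<ge> \<mu> * norm (z' - z)^2"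
  shows "inner (J h) h \<ge> \<mu> * norm h ^ 2"
proof (rule ccontr)
  assume neg: "\<not> ?thesis"
  define q where "q t = inner (F (w + t *\<^sub>R h)) h - \<mu> * t * norm h ^ 2" for t
  have "((\<lambda>z. inner (F z) h) has_derivative (\<lambda>k. inner (J k) h)) (at (w + 0 *\<^sub>R h))"
    using d by (auto intro!: derivative_eq_intros)
  from line_deriv[OF this]
  have "((\<lambda>t. inner (F (w + t *\<^sub>R h)) h) has_field_derivative inner (J h) h) (at 0)" .
  then have "(q has_field_derivative (inner (J h) h - \<mu> * norm h ^ 2)) (at 0)"
    unfolding q_def by (auto intro!: derivative_eq_intros)
  from DERIV_neg_dec_right[OF this] neg obtain e where e: "e > 0" "\<And>t. t > 0 \<Longrightarrow> t < e \<Longrightarrow> q 0 > q (0 + t)"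
    by force
  have "q 0 \<le> q (e/2)"
  proof -
    have m: "inner (F (w + (e/2) *\<^sub>R h) - F w) ((e/2) *\<^sub>R h) \<ge> \<mu> * norm ((e/2) *\<^sub>R h)^2"
      using mono[where z=w and z'="w + (e/2) *\<^sub>R h"] by (simp only: add_diff_cancel_left')
    have A: "inner (F (w + (e/2) *\<^sub>R h) - F w) ((e/2) *\<^sub>R h) = (e/2) * (inner (F (w + (e/2) *\<^sub>R h)) h - inner (F w) h)"
      by (simp add: inner_diff_left)
    have B: "\<mu> * norm ((e/2) *\<^sub>R h)^2 = (e/2) * ((e/2) * \<mu> * norm h ^ 2)"
      using e by (simp add: power2_eq_square)
    have "(e/2) * ((e/2) * \<mu> * norm h ^ 2) \<le> (e/2) * (inner (F (w + (e/2) *\<^sub>R h)) h - inner (F w) h)"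
      using m A B by linarith
    then have "(e/2) * \<mu> * norm h ^ 2 \<le> inner (F (w + (e/2) *\<^sub>R h)) h - inner (F w) h"
      using e by (simp add: mult_le_cancel_left_pos ac_simps)
    then show ?thesis unfolding q_def by (simp add: algebra_simps)
  qed
  moreover have "q 0 > q (0 + e/2)" using e by auto
  ultimately show False by simp
qed

lemma JF_formula:
  fixes g :: "'x::euclidean_space \<times> 'y::euclidean_space \<Rightarrow> 'x \<times> 'y"
  assumes hess: "\<And>w. (g has_derivative blinfun_apply (H w)) (at w)"
    and JF_deriv: "\<And>w. (saddle_field g has_derivative blinfun_apply (JF w)) (at w)"
  shows "JF w h = (fst (H w h), - snd (H w h))"
proof -
  have "((\<lambda>z. (fst (g z), - snd (g z))) has_derivative (\<lambda>h. (fst (H w h), - snd (H w h)))) (at w)"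
    by (rule derivative_eq_intros hess | simp)+
  then have "(saddle_field g has_derivative (\<lambda>h. (fst (H w h), - snd (H w h)))) (at w)"
    by (simp add: saddle_field_def[abs_def])
  from has_derivative_unique[OF JF_deriv this] show ?thesis by metis
qed


lemma norm_cube_deriv0:
  fixes x :: "'a::real_inner"
  shows "((\<lambda>x. norm x ^ 3) has_derivative (\<lambda>h. 3 * norm x * inner x h)) (at x)"
proof (cases "x = 0")
  case False
  have d: "((\<lambda>x. norm x ^ 3) has_derivative (\<lambda>h. of_nat 3 * inner h (sgn x) * norm x ^ (3 - 1))) (at x)"
    by (rule has_derivative_power has_derivative_norm[OF False])+
  have eq: "of_nat 3 * inner h (sgn x) * norm x ^ (3 - 1) = 3 * norm x * inner x h" for h
  proof -
    have "inner h (sgn x) = inner x h / norm x" by (simp add: sgn_div_norm inner_commute divide_inverse_commute)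
    then show ?thesis using False by (simp add: power2_eq_square)
  qed
  have eqf: "(\<lambda>h. of_nat 3 * inner h (sgn x) * norm x ^ (3 - 1)) = (\<lambda>h. 3 * norm x * inner x h)"
    by (rule ext) (rule eq)
  show ?thesis using d unfolding eqf .
next
  case True
  have "((\<lambda>h. norm h ^ 2) \<longlongrightarrow> 0) (at (0::'a))"
    by (auto intro!: tendsto_eq_intros)
  moreover have "\<forall>\<^sub>F h in at (0::'a). norm h ^ 2 = norm (norm (0 + h) ^ 3 - norm (0::'a) ^ 3 - 0) / norm h"
    unfolding eventually_at_filter by (rule always_eventually) (auto simp: power2_eq_square power3_eq_cube)
  ultimately have "((\<lambda>h::'a. norm (norm (0 + h) ^ 3 - norm (0::'a) ^ 3 - 0) / norm h) \<longlongrightarrow> 0) (at 0)"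
    by (rule Lim_transform_eventually)
  then show ?thesis using True by (simp add: has_derivative_at bounded_linear_zero)
qed

lemma norm_cube_deriv:
  fixes \<phi> :: "'b::real_normed_vector \<Rightarrow> 'a::real_inner"
  assumes "(\<phi> has_derivative \<phi>') (at x)"
  shows "((\<lambda>x. norm (\<phi> x) ^ 3) has_derivative (\<lambda>h. 3 * norm (\<phi> x) * inner (\<phi> x) (\<phi>' h))) (at x)"
  using has_derivative_compose[OF assms norm_cube_deriv0] by simp

lemma model_deriv:
  fixes zk p :: "'x::euclidean_space \<times> 'y::euclidean_space"
  shows "((\<lambda>p. crn_model fz gz Hz zk \<gamma> (fst p) (snd p)) has_derivative
     (\<lambda>h. inner gz h + 1/2 * (inner h (Hz (p - zk)) + inner (p - zk) (Hz h))
        + \<gamma>/3 * (3 * norm (fst p - fst zk) * inner (fst p - fst zk) (fst h))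
        - \<gamma>/3 * (3 * norm (snd p - snd zk) * inner (snd p - snd zk) (snd h)))) (at p)"
proof -
  have e: "(\<lambda>p. crn_model fz gz Hz zk \<gamma> (fst p) (snd p)) = (\<lambda>p. fz + inner gz (p - zk) + (1/2) * inner (p - zk) (Hz (p - zk))
     + (\<gamma>/3) * norm (fst p - fst zk) ^ 3 - (\<gamma>/3) * norm (snd p - snd zk) ^ 3)"
    by (simp add: crn_model_def fun_eq_iff)
  have c1: "((\<lambda>p. norm (fst p - fst zk)^3) has_derivative (\<lambda>h. 3 * norm (fst p - fst zk) * inner (fst p - fst zk) (fst h))) (at p)"
  proof (rule norm_cube_deriv)
    have "((\<lambda>x. fst x - fst zk) has_derivative (\<lambda>h. fst h - 0)) (at p)" by (intro derivative_eq_intros) (auto simp: fun_eq_iff)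
    then show "((\<lambda>x. fst x - fst zk) has_derivative fst) (at p)" by simp
  qed
  have c2: "((\<lambda>p. norm (snd p - snd zk)^3) has_derivative (\<lambda>h. 3 * norm (snd p - snd zk) * inner (snd p - snd zk) (snd h))) (at p)"
  proof (rule norm_cube_deriv)
    have "((\<lambda>x. snd x - snd zk) has_derivative (\<lambda>h. snd h - 0)) (at p)" by (intro derivative_eq_intros) (auto simp: fun_eq_iff)
    then show "((\<lambda>x. snd x - snd zk) has_derivative snd) (at p)" by simp
  qed
  show ?thesis unfolding e
    apply (rule c1 | rule c2 | rule derivative_eq_intros | rule refl)+
    apply (simp add: fun_eq_iff algebra_simps)
    done
qed

lemma crn_stationary:
  fixes zk d :: "'x::euclidean_space \<times> 'y::euclidean_space"
  assumes step: "crn_step f g H zk \<gamma> d"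
    and sym: "\<And>a b. inner a (H zk b) = inner b (H zk a)"
  shows "fst (g zk + H zk d) = - ((\<gamma> * norm (fst d)) *\<^sub>R fst d)
       \<and> snd (g zk + H zk d) = (\<gamma> * norm (snd d)) *\<^sub>R snd d"
proof -
  define p where "p = zk + d"
  define M where "M q = crn_model (f zk) (g zk) (H zk) zk \<gamma> (fst q) (snd q)" for q
  define R where "R = g zk + H zk d + ((\<gamma> * norm (fst d)) *\<^sub>R fst d, - ((\<gamma> * norm (snd d)) *\<^sub>R snd d))"
  have pz: "p - zk = d" "fst p - fst zk = fst d" "snd p - snd zk = snd d" unfolding p_def by auto
  have dM0: "(M has_derivative
     (\<lambda>h. inner (g zk) h + 1/2 * (inner h (H zk (p - zk)) + inner (p - zk) (H zk h))
        + \<gamma>/3 * (3 * norm (fst p - fst zk) * inner (fst p - fst zk) (fst h))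
        - \<gamma>/3 * (3 * norm (snd p - snd zk) * inner (snd p - snd zk) (snd h)))) (at p)"
    unfolding M_def by (rule model_deriv)
  have eqD: "(\<lambda>h. inner (g zk) h + 1/2 * (inner h (H zk (p - zk)) + inner (p - zk) (H zk h))
        + \<gamma>/3 * (3 * norm (fst p - fst zk) * inner (fst p - fst zk) (fst h))
        - \<gamma>/3 * (3 * norm (snd p - snd zk) * inner (snd p - snd zk) (snd h))) = (\<lambda>h. inner R h)"
  proof (rule ext)
    fix h
    have "inner d (H zk h) = inner h (H zk d)" by (rule sym)
    then show "inner (g zk) h + 1/2 * (inner h (H zk (p - zk)) + inner (p - zk) (H zk h))
        + \<gamma>/3 * (3 * norm (fst p - fst zk) * inner (fst p - fst zk) (fst h))
        - \<gamma>/3 * (3 * norm (snd p - snd zk) * inner (snd p - snd zk) (snd h)) = inner R h"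
    proof -
      obtain h1 h2 where h: "h = (h1, h2)" by fastforce
      have "inner R h = inner (g zk) h + inner h (H zk d) + \<gamma> * norm (fst d) * inner (fst d) h1 - \<gamma> * norm (snd d) * inner (snd d) h2"
        unfolding R_def h by (simp add: inner_add_left inner_Pair inner_commute[of "H zk d"])
      then show ?thesis unfolding pz \<open>inner d (H zk h) = inner h (H zk d)\<close> by (simp add: h)
    qed
  qed
  have dM: "(M has_derivative (\<lambda>h. inner R h)) (at p)" using dM0 unfolding eqD .
  have sp: "is_saddle_point (crn_model (f zk) (g zk) (H zk) zk \<gamma>) (fst p) (snd p)"
    using step unfolding crn_step_def p_def .
  have mn: "M p \<le> M (x, snd p)" for x
    using sp unfolding is_saddle_point_def M_def by simp
  have mx: "M (fst p, y) \<le> M p" for y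
    using sp unfolding is_saddle_point_def M_def by simp
  have dx: "((\<lambda>x. M (x, snd p)) has_derivative (\<lambda>h. inner R (h, 0))) (at (fst p))"
  proof -
    have "((\<lambda>x. (x, snd p)) has_derivative (\<lambda>h. (h, 0))) (at (fst p))"
      by (intro derivative_eq_intros) auto
    moreover have "(M has_derivative (\<lambda>h. inner R h)) (at (fst p, snd p))" using dM by simp
    ultimately show ?thesis by (rule has_derivative_compose)
  qed
  have dy: "((\<lambda>y. M (fst p, y)) has_derivative (\<lambda>h. inner R (0, h))) (at (snd p))"
  proof -
    have "((\<lambda>y. (fst p, y)) has_derivative (\<lambda>h. (0, h))) (at (snd p))"
      by (intro derivative_eq_intros) auto
    moreover have "(M has_derivative (\<lambda>h. inner R h)) (at (fst p, snd p))" using dM by simp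
    ultimately show ?thesis by (rule has_derivative_compose)
  qed
  have "(\<lambda>h. inner R (h, 0)) = (\<lambda>h. 0)"
  proof (rule has_derivative_local_min[OF dx])
    show "\<forall>\<^sub>F y in at (fst p). M (fst p, snd p) \<le> M (y, snd p)"
      using mn by (intro always_eventually) simp
  qed
  then have "inner R (fst R, 0) = 0" by metis
  then have R1: "fst R = 0" by (cases R) (simp add: inner_Pair)
  have "(\<lambda>h. inner R (0, h)) = (\<lambda>h. 0)"
  proof (rule has_derivative_local_max[OF dy])
    show "\<forall>\<^sub>F y in at (snd p). M (fst p, y) \<le> M (fst p, snd p)"
      using mx by (intro always_eventually) simp
  qed
  then have "inner R (0, snd R) = 0" by metis
  then have R2: "snd R = 0" by (cases R) (simp add: inner_Pair)
  have "fst (g zk + H zk d) + (\<gamma> * norm (fst d)) *\<^sub>R fst d = 0" using R1 unfolding R_def by simp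
  then have 1: "fst (g zk + H zk d) = - ((\<gamma> * norm (fst d)) *\<^sub>R fst d)" by (simp only: eq_neg_iff_add_eq_0)
  have "snd (g zk + H zk d) - (\<gamma> * norm (snd d)) *\<^sub>R snd d = 0" using R2 unfolding R_def by simp
  then have 2: "snd (g zk + H zk d) = (\<gamma> * norm (snd d)) *\<^sub>R snd d" by (simp only: right_minus_eq)
  show ?thesis using 1 2 by blast
qed

lemma sq_from_lin:
  fixes a b c :: real
  assumes "\<mu> > 0" "\<mu> * c^2 \<le> a * c" "a \<ge> 0" "c \<ge> 0"
  shows "\<mu>^2 * c^2 \<le> a^2"
proof (cases "c = 0")
  case True then show ?thesis by simp
next
  case False
  then have "c > 0" using assms by simp
  then have "\<mu> * c \<le> a" using assms(2) by (simp add: power2_eq_square mult.assoc[symmetric] mult_le_cancel_right_pos)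
  then have "(\<mu> * c)^2 \<le> a^2" using assms \<open>c > 0\<close> by (intro power_mono) auto
  then show ?thesis by (simp add: power_mult_distrib)
qed

lemma key_ineq:
  fixes P :: "('x::euclidean_space \<times> 'y::euclidean_space) \<Rightarrow>\<^sub>L ('x \<times> 'y)" and F0 d :: "'x \<times> 'y"
  assumes mu: "\<mu> > 0" and gam: "\<gamma> \<ge> 0" and test: "\<gamma> * (norm (fst d) + norm (snd d)) \<le> \<mu>"
    and quad: "\<And>h. inner (P h) h \<ge> \<mu> * norm h ^ 2"
    and stat: "F0 + P d = - (\<gamma> *\<^sub>R (norm (fst d) *\<^sub>R fst d, norm (snd d) *\<^sub>R snd d))"
  shows "inner F0 (P d) \<le> - (\<mu>^2 / 2) * norm d ^ 2"
proof -
  define a where "a = norm (fst d)"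
  define b where "b = norm (snd d)"
  define w where "w = (norm (fst d) *\<^sub>R fst d, norm (snd d) *\<^sub>R snd d)"
  have a0: "a \<ge> 0" and b0: "b \<ge> 0" unfolding a_def b_def by auto
  have nd: "norm d ^ 2 = a^2 + b^2" unfolding a_def b_def by (cases d) (simp add: norm_Pair)
  have nw: "norm w ^ 2 = a^4 + b^4" unfolding w_def a_def b_def
    by (simp add: norm_Pair power_mult_distrib)
  have "a^4 + b^4 \<le> (a + b)^2 * (a^2 + b^2)"
    using a0 b0 by (simp add: power2_eq_square power4_eq_xxxx algebra_simps add_nonneg_nonneg mult_nonneg_nonneg)
  then have "\<gamma>^2 * norm w ^ 2 \<le> \<gamma>^2 * ((a + b)^2 * (a^2 + b^2))"
    unfolding nw by (intro mult_left_mono) auto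
  also have "\<dots> = (\<gamma> * (a + b))^2 * norm d ^ 2" unfolding nd by (simp add: power_mult_distrib)
  also have "\<dots> \<le> \<mu>^2 * norm d ^ 2"
    using test gam a0 b0 unfolding a_def[symmetric] b_def[symmetric]
    by (intro mult_right_mono power_mono) auto
  finally have A: "norm (F0 + P d) ^ 2 \<le> \<mu>^2 * norm d ^ 2"
    unfolding stat w_def[symmetric] using gam by (simp add: power_mult_distrib)
  have "\<mu> * norm d ^ 2 \<le> inner (P d) d" by (rule quad)
  also have "\<dots> \<le> norm (P d) * norm d" by (rule norm_cauchy_schwarz)
  finally have B: "\<mu>^2 * norm d ^ 2 \<le> norm (P d) ^ 2" by (rule sq_from_lin[OF mu]) auto
  have wd: "inner w d \<ge> 0" unfolding w_def by (cases d) (simp add: inner_Pair)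
  have "\<mu> * norm d ^ 2 \<le> inner (P d) d + \<gamma> * inner w d"
    using quad[of d] wd gam by (simp add: add_increasing2)
  also have "\<dots> = inner (- F0) d"
  proof -
    have "- F0 = - (F0 + P d) + P d" by simp
    also have "\<dots> = P d + \<gamma> *\<^sub>R w" unfolding stat w_def[symmetric] by simp
    finally have "- F0 = P d + \<gamma> *\<^sub>R w" .
    then show ?thesis by (simp add: inner_add_left)
  qed
  also have "\<dots> \<le> norm (- F0) * norm d" by (rule norm_cauchy_schwarz)
  finally have C: "\<mu>^2 * norm d ^ 2 \<le> norm F0 ^ 2" using sq_from_lin[OF mu] by force
  have pol: "norm (F0 + P d) ^ 2 = norm F0 ^ 2 + 2 * inner F0 (P d) + norm (P d) ^ 2"
    by (simp add: power2_norm_eq_inner inner_add_left inner_add_right inner_commute)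
  show ?thesis using A B C pol by (simp add: field_simps)
qed

lemma F_lipschitz:
  fixes F :: "'a::real_normed_vector \<Rightarrow> 'b::real_normed_vector"
  assumes Fd: "\<And>w. (F has_derivative blinfun_apply (J w)) (at w)"
    and Jb: "\<And>w. norm (J w) \<le> L"
  shows "norm (F a - F b) \<le> L * norm (a - b)"
proof -
  have "norm (F a - F b) \<le> L * norm (a - b)"
    by (rule differentiable_bound[where S=UNIV and f'="\<lambda>w. blinfun_apply (J w)"])
       (auto simp: Fd has_derivative_at_withinI norm_blinfun.rep_eq[symmetric] Jb)
  then show ?thesis .
qed

lemma merit_descent:
  fixes F :: "'a::real_inner \<Rightarrow> 'a" and J :: "'a \<Rightarrow> 'a \<Rightarrow>\<^sub>L 'a"
  assumes Fd: "\<And>w. (F has_derivative blinfun_apply (J w)) (at w)"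
    and Jb: "\<And>w. norm (J w) \<le> L"
    and Jl: "\<And>w w'. norm (J w - J w') \<le> L2 * norm (w - w')"
    and al: "\<alpha> \<ge> 0"
  shows "merit F (z + \<alpha> *\<^sub>R d) - merit F z \<le> \<alpha> * inner (F z) (J z d) + \<alpha>^2 / 2 * ((L^2 + L2 * norm (F z)) * norm d ^ 2)"
proof -
  define K where "K = (L^2 + L2 * norm (F z)) * norm d ^ 2"
  define \<phi> where "\<phi> t = 1/2 * inner (F (z + t *\<^sub>R d)) (F (z + t *\<^sub>R d))" for t
  define \<phi>' where "\<phi>' t = inner (F (z + t *\<^sub>R d)) (J (z + t *\<^sub>R d) d)" for t
  have d\<phi>: "(\<phi> has_field_derivative \<phi>' t) (at t)" for t
  proof -
    have "((\<lambda>x. 1/2 * inner (F x) (F x)) has_derivative (\<lambda>h. 1/2 * (inner (F (z + t *\<^sub>R d)) (J (z + t *\<^sub>R d) h) + inner (J (z + t *\<^sub>R d) h) (F (z + t *\<^sub>R d))))) (at (z + t *\<^sub>R d))"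
      by (rule derivative_eq_intros Fd refl | simp)+
    from line_deriv[OF this] show ?thesis unfolding \<phi>_def \<phi>'_def by (simp add: inner_commute)
  qed
  define \<psi> where "\<psi> t = \<phi> t - t * \<phi>' 0 - K * t^2 / 2" for t
  have d\<psi>: "(\<psi> has_field_derivative (\<phi>' t - \<phi>' 0 - K * t)) (at t)" for t
  proof -
    have "(\<psi> has_field_derivative (\<phi>' t - 1 * \<phi>' 0 - K * (of_nat 2 * t ^ (2 - 1)) / 2)) (at t)"
      unfolding \<psi>_def by (rule derivative_eq_intros d\<phi> refl | simp)+
    then show ?thesis by simp
  qed
  have neg: "\<phi>' t - \<phi>' 0 - K * t \<le> 0" if t: "t \<ge> 0" for t
  proof -
    define zt where "zt = z + t *\<^sub>R d"
    have "\<phi>' t - \<phi>' 0 = inner (F zt - F z) (J zt d) + inner (F z) ((J zt - J z) d)"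
      unfolding \<phi>'_def zt_def by (simp add: inner_diff_left inner_diff_right blinfun.diff_left)
    also have "\<dots> \<le> norm (F zt - F z) * norm (J zt d) + norm (F z) * norm ((J zt - J z) d)"
      by (intro add_mono norm_cauchy_schwarz)
    also have "\<dots> \<le> (L * (t * norm d)) * (L * norm d) + norm (F z) * ((L2 * (t * norm d)) * norm d)"
    proof (intro add_mono mult_mono mult_left_mono)
      show "norm (F zt - F z) \<le> L * (t * norm d)"
        using F_lipschitz[OF Fd Jb, of zt z] t unfolding zt_def by simp
      show "norm (J zt d) \<le> L * norm d"
        using norm_blinfun[of "J zt" d] Jb[of zt] by (meson mult_right_mono norm_ge_zero order_trans)
      show "norm ((J zt - J z) d) \<le> L2 * (t * norm d) * norm d"
        using norm_blinfun[of "J zt - J z" d] Jl[of zt z] t unfolding zt_def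
        by (smt (verit, ccfv_SIG) add_diff_cancel_left' mult_right_mono norm_ge_zero norm_scaleR)
      have "0 \<le> norm (F zt - F z)" by simp
      also have "\<dots> \<le> L * (t * norm d)" using F_lipschitz[OF Fd Jb, of zt z] t unfolding zt_def by simp
      finally show "0 \<le> L * (t * norm d)" .
    qed auto
    also have "\<dots> = K * t" unfolding K_def by (simp add: power2_eq_square algebra_simps)
    finally show ?thesis by simp
  qed
  have "\<psi> \<alpha> \<le> \<psi> 0"
    using DERIV_nonpos_imp_nonincreasing[of 0 \<alpha> \<psi>] al d\<psi> neg by blast
  then have "\<phi> \<alpha> - \<phi> 0 \<le> \<alpha> * \<phi>' 0 + \<alpha>^2 / 2 * K"
    unfolding \<psi>_def by (simp add: algebra_simps)
  moreover have "merit F (z + \<alpha> *\<^sub>R d) = \<phi> \<alpha>" "merit F z = \<phi> 0"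
    unfolding merit_def \<phi>_def by (simp_all add: power2_norm_eq_inner)
  ultimately show ?thesis unfolding K_def \<phi>'_def by simp
qed

lemma merit_deriv:
  fixes F :: "'a::real_inner \<Rightarrow> 'a"
  assumes "(F has_derivative blinfun_apply J) (at w)"
  shows "(merit F has_derivative (\<lambda>h. inner (F w) (J h))) (at w)"
proof -
  have e: "merit F = (\<lambda>x. 1/2 * inner (F x) (F x))"
    by (simp add: merit_def fun_eq_iff power2_norm_eq_inner)
  have "((\<lambda>x. 1/2 * inner (F x) (F x)) has_derivative (\<lambda>h. 1/2 * (inner (F w) (J h) + inner (J h) (F w)))) (at w)"
    by (rule derivative_eq_intros assms refl | simp)+
  then show ?thesis unfolding e by (simp add: inner_commute)
qed

lemma level_bounded:
  fixes F :: "'a::real_inner \<Rightarrow> 'a"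
  assumes mu: "\<mu> > 0"
    and mono: "\<And>z z'. inner (F z' - F z) (z' - z) \<ge> \<mu> * norm (z' - z)^2"
    and w: "merit F w \<le> merit F z0"
  shows "norm (w - z0) \<le> 2 * norm (F z0) / \<mu>"
proof -
  have "norm (F w) ^ 2 \<le> norm (F z0) ^ 2" using w unfolding merit_def by simp
  then have Fw: "norm (F w) \<le> norm (F z0)" using power2_le_imp_le by fastforce
  have "\<mu> * norm (w - z0) ^ 2 \<le> inner (F w - F z0) (w - z0)" by (rule mono)
  also have "\<dots> \<le> norm (F w - F z0) * norm (w - z0)" by (rule norm_cauchy_schwarz)
  also have "\<dots> \<le> (2 * norm (F z0)) * norm (w - z0)"
    using Fw norm_triangle_ineq4[of "F w" "F z0"] by (intro mult_right_mono) auto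
  finally have *: "\<mu> * norm (w - z0) ^ 2 \<le> (2 * norm (F z0)) * norm (w - z0)" .
  show ?thesis
  proof (cases "norm (w - z0) = 0")
    case True then show ?thesis using mu by simp
  next
    case False
    then have "\<mu> * norm (w - z0) \<le> 2 * norm (F z0)"
      using * by (simp add: power2_eq_square mult.assoc[symmetric] mult_le_cancel_right_pos)
    then show ?thesis using mu by (simp add: field_simps)
  qed
qed

lemma zero_exists:
  fixes F :: "'a::euclidean_space \<Rightarrow> 'a"
  assumes mu: "\<mu> > 0"
    and Fd: "\<And>w. (F has_derivative blinfun_apply (J w)) (at w)"
    and mono: "\<And>z z'. inner (F z' - F z) (z' - z) \<ge> \<mu> * norm (z' - z)^2"
    and quad: "\<And>w h. inner (J w h) h \<ge> \<mu> * norm h ^ 2"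
  shows "\<exists>zs. F zs = 0"
proof -
  define S where "S = {w. merit F w \<le> merit F z0}"
  have contm: "continuous_on UNIV (merit F)"
    by (rule has_derivative_continuous_on) (auto intro: merit_deriv[OF Fd] has_derivative_at_withinI)
  have "closed S" unfolding S_def
    using contm by (intro closed_Collect_le continuous_intros) (auto simp: continuous_on_const)
  moreover have "bounded S"
    unfolding bounded_iff S_def
  proof (intro exI ballI)
    fix w assume "w \<in> {w. merit F w \<le> merit F z0}"
    then have "norm (w - z0) \<le> 2 * norm (F z0) / \<mu>" using level_bounded[OF mu mono] by auto
    then show "norm w \<le> norm z0 + 2 * norm (F z0) / \<mu>"
      using norm_triangle_ineq2[of w z0] by linarith
  qed
  ultimately have "compact S" by (simp add: compact_eq_bounded_closed)
  moreover have "S \<noteq> {}" unfolding S_def by auto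
  moreover have "continuous_on S (merit F)" using contm by (rule continuous_on_subset) auto
  ultimately obtain zs where zs: "zs \<in> S" "\<And>y. y \<in> S \<Longrightarrow> merit F zs \<le> merit F y"
    using continuous_attains_inf by metis
  have glob: "merit F zs \<le> merit F y" for y
  proof (cases "y \<in> S")
    case True then show ?thesis using zs by auto
  next
    case False then show ?thesis using zs(1) unfolding S_def by auto
  qed
  have "(\<lambda>h. inner (F zs) (J zs h)) = (\<lambda>h. 0)"
    by (rule has_derivative_local_min[OF merit_deriv[OF Fd]]) (intro always_eventually allI glob)
  then have "inner (F zs) (J zs (F zs)) = 0" by metis
  then have "\<mu> * norm (F zs) ^ 2 \<le> 0" using quad[where w=zs and h="F zs"] by (simp add: inner_commute)
  then have "F zs = 0" using mu by (simp add: mult_le_0_iff)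
  then show ?thesis by blast
qed

theorem proposition3p4:
  fixes f :: "(real ^ 'n) \<times> (real ^ 'm) \<Rightarrow> real"
    and g :: "(real ^ 'n) \<times> (real ^ 'm) \<Rightarrow> (real ^ 'n) \<times> (real ^ 'm)"
    and H :: "(real ^ 'n) \<times> (real ^ 'm) \<Rightarrow> ((real ^ 'n) \<times> (real ^ 'm)) \<Rightarrow>\<^sub>L ((real ^ 'n) \<times> (real ^ 'm))"
    and JF :: "(real ^ 'n) \<times> (real ^ 'm) \<Rightarrow> ((real ^ 'n) \<times> (real ^ 'm)) \<Rightarrow>\<^sub>L ((real ^ 'n) \<times> (real ^ 'm))"
    and \<mu> L L2 gbar \<rho> \<alpha> D Lm :: real
    and z d :: "nat \<Rightarrow> (real ^ 'n) \<times> (real ^ 'm)"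
  assumes grad: "\<And>w. (f has_derivative (\<lambda>h. inner (g w) h)) (at w)"
    and hess: "\<And>w. (g has_derivative blinfun_apply (H w)) (at w)"
    and hess_cont: "continuous_on UNIV H"
    and mu_pos: "\<mu> > 0"
    and strong_convex: "\<And>y. convex_on UNIV (\<lambda>x. f (x, y) - (\<mu> / 2) * (norm x)^2)"
    and strong_concave: "\<And>x. convex_on UNIV (\<lambda>y. - f (x, y) - (\<mu> / 2) * (norm y)^2)"
    and JF_deriv: "\<And>w. (saddle_field g has_derivative blinfun_apply (JF w)) (at w)"
    and JF_bound: "\<And>w. norm (JF w) \<le> L"
    and JF_lip: "\<And>w w'. norm (JF w - JF w') \<le> L2 * norm (w - w')"
    and D_def: "D = Sup ((\<lambda>w. norm (w - z 0)) ` {w. merit (saddle_field g) w \<le> merit (saddle_field g) (z 0)})"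
    and Lm_def: "Lm = L^2 + L2 * L * D"
    and gbar_pos: "gbar > 0"
    and rho: "0 < \<rho>" "\<rho> < 1"
    and alpha_def: "\<alpha> = \<mu>^2 / (2 * Lm)"
    and alpha_lt1: "\<alpha> < 1"
    and gen: "crn_spp_sequence f g H gbar \<rho> \<alpha> \<mu> z d"
  shows "\<forall>k. merit (saddle_field g) (z (Suc k)) - merit (saddle_field g) (z k)
             \<le> - (\<mu>^4 / (8 * Lm)) * (norm (d k))^2"
proof -
  define F where "F = saddle_field g"
  have JFd: "\<And>w. (F has_derivative blinfun_apply (JF w)) (at w)"
    unfolding F_def by (rule JF_deriv)
  have JFf: "\<And>w h. JF w h = (fst (H w h), - snd (H w h))"
    by (rule JF_formula[OF hess JF_deriv])
  have mono: "\<And>z z'. inner (F z' - F z) (z' - z) \<ge> \<mu> * norm (z' - z)^2"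
    unfolding F_def by (rule F_strong_mono[OF grad strong_convex strong_concave])
  have quad: "\<And>w h. inner (JF w h) h \<ge> \<mu> * norm h ^ 2"
    by (rule mono_deriv_quad[OF JFd mono])
  have sym: "\<And>w a b. inner a (H w b) = inner b (H w a)"
    by (rule hess_sym[OF grad hess hess_cont])
  obtain zs where zs: "F zs = 0" using zero_exists[OF mu_pos JFd mono quad] by blast
  define S where "S = {w. merit F w \<le> merit F (z 0)}"
  have DS: "D = Sup ((\<lambda>w. norm (w - z 0)) ` S)" unfolding S_def F_def by (rule D_def)
  have bdd: "bdd_above ((\<lambda>w. norm (w - z 0)) ` S)"
    unfolding bdd_above_def S_def using level_bounded[OF mu_pos mono] by blast
  have zsS: "zs \<in> S" unfolding S_def merit_def using zs by simp
  have Dzs: "norm (zs - z 0) \<le> D" unfolding DS by (rule cSUP_upper[OF zsS bdd])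
  have D0: "D \<ge> 0" using Dzs norm_ge_zero order_trans by blast
  obtain e :: "(real ^ 'n) \<times> (real ^ 'm)" where e: "norm e = 1" using vector_choose_size[of 1] by (metis zero_le_one)
  have "\<mu> = \<mu> * norm e ^ 2" using e by simp
  also have "\<dots> \<le> inner (JF (z 0) e) e" by (rule quad)
  also have "\<dots> \<le> norm (JF (z 0) e) * norm e" by (rule norm_cauchy_schwarz)
  also have "\<dots> \<le> norm (JF (z 0)) * norm e" using e norm_blinfun[of "JF (z 0)" e] by simp
  also have "\<dots> \<le> L" using e JF_bound[of "z 0"] by simp
  finally have muL: "\<mu> \<le> L" .
  have L0: "L \<ge> 0" using muL mu_pos by simp
  have L20: "L2 \<ge> 0" using JF_lip[of e 0] e norm_ge_zero[of "JF e - JF 0"] by (simp del: norm_ge_zero)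
  have Lm_pos: "Lm > 0"
  proof -
    have "\<mu>^2 \<le> L^2" using muL mu_pos by (intro power_mono) auto
    moreover have "L2 * L * D \<ge> 0" using L0 L20 D0 by simp
    ultimately show ?thesis unfolding Lm_def using mu_pos by (smt (verit) zero_less_power)
  qed
  have al0: "\<alpha> > 0" unfolding alpha_def using Lm_pos mu_pos by simp
  have alLm: "\<alpha> * Lm = \<mu>^2 / 2" unfolding alpha_def using Lm_pos by simp
  have FB: "norm (F w) \<le> L * D" if w: "merit F w \<le> merit F (z 0)" for w
  proof -
    have "norm (F w) ^ 2 \<le> norm (F (z 0)) ^ 2" using w unfolding merit_def by simp
    then have "norm (F w) \<le> norm (F (z 0))" using power2_le_imp_le by fastforce
    also have "\<dots> = norm (F (z 0) - F zs)" using zs by simp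
    also have "\<dots> \<le> L * norm (z 0 - zs)" by (rule F_lipschitz[OF JFd JF_bound])
    also have "\<dots> \<le> L * D" using Dzs L0 by (simp add: norm_minus_commute mult_left_mono)
    finally show ?thesis .
  qed
  have step: "merit F (z (Suc k)) - merit F (z k) \<le> - (\<mu>^4 / (8 * Lm)) * (norm (d k))^2"
    if Pk: "merit F (z k) \<le> merit F (z 0)" for k
  proof -
    from gen obtain j where st: "crn_step f g H (z k) (gbar * \<rho> ^ j) (d k)"
      and test: "gbar * \<rho> ^ j * (norm (fst (d k)) + norm (snd (d k))) \<le> \<mu>"
      and zS: "z (Suc k) = (if merit F (z k + \<alpha> *\<^sub>R d k) < merit F (z k + d k)
             then z k + \<alpha> *\<^sub>R d k else z k + d k)"
      unfolding crn_spp_sequence_def F_def by blast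
    define \<gamma> where "\<gamma> = gbar * \<rho> ^ j"
    have g0: "\<gamma> \<ge> 0" unfolding \<gamma>_def using gbar_pos rho by simp
    note stat0 = crn_stationary[OF st sym]
    define u where "u = fst (d k)"
    define v where "v = snd (d k)"
    have stat: "F (z k) + JF (z k) (d k) = - (\<gamma> *\<^sub>R (norm (fst (d k)) *\<^sub>R fst (d k), norm (snd (d k)) *\<^sub>R snd (d k)))"
    proof -
      have "F (z k) + JF (z k) (d k) = (fst (g (z k) + H (z k) (d k)), - snd (g (z k) + H (z k) (d k)))"
        unfolding F_def saddle_field_def JFf by simp
      also have "\<dots> = - (\<gamma> *\<^sub>R (norm (fst (d k)) *\<^sub>R fst (d k), norm (snd (d k)) *\<^sub>R snd (d k)))"
        using stat0 unfolding \<gamma>_def by simp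
      finally show ?thesis .
    qed
    have key: "inner (F (z k)) (JF (z k) (d k)) \<le> - (\<mu>^2 / 2) * norm (d k) ^ 2"
      by (rule key_ineq[OF mu_pos g0 test[folded \<gamma>_def] quad stat])
    have desc: "merit F (z k + \<alpha> *\<^sub>R d k) - merit F (z k) \<le> \<alpha> * inner (F (z k)) (JF (z k) (d k))
        + \<alpha>^2 / 2 * ((L^2 + L2 * norm (F (z k))) * norm (d k) ^ 2)"
      using al0 by (intro merit_descent[OF JFd JF_bound JF_lip]) simp
    have "L2 * norm (F (z k)) \<le> L2 * (L * D)" using FB[OF Pk] L20 by (rule mult_left_mono)
    then have "(L^2 + L2 * norm (F (z k))) * norm (d k) ^ 2 \<le> Lm * norm (d k) ^ 2"
      unfolding Lm_def by (intro mult_right_mono) (auto simp: mult.assoc)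
    then have "\<alpha>^2 / 2 * ((L^2 + L2 * norm (F (z k))) * norm (d k) ^ 2) \<le> \<alpha>^2 / 2 * (Lm * norm (d k) ^ 2)"
      by (intro mult_left_mono) auto
    moreover have "\<alpha> * inner (F (z k)) (JF (z k) (d k)) \<le> \<alpha> * (- (\<mu>^2 / 2) * norm (d k) ^ 2)"
      using key al0 by (intro mult_left_mono) auto
    ultimately have "merit F (z k + \<alpha> *\<^sub>R d k) - merit F (z k) \<le> \<alpha> * (- (\<mu>^2 / 2) * norm (d k) ^ 2) + \<alpha>^2 / 2 * (Lm * norm (d k) ^ 2)"
      using desc by linarith
    also have "\<dots> = - (\<mu>^4 / (8 * Lm)) * (norm (d k))^2"
    proof -
      have "\<alpha>^2 / 2 * (Lm * norm (d k) ^ 2) = \<alpha> * (\<alpha> * Lm) / 2 * norm (d k) ^ 2"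
        by (simp add: power2_eq_square)
      also have "\<dots> = \<alpha> * (\<mu>^2 / 4) * norm (d k) ^ 2" unfolding alLm by simp
      finally have 1: "\<alpha>^2 / 2 * (Lm * norm (d k) ^ 2) = \<alpha> * (\<mu>^2 / 4) * norm (d k) ^ 2" .
      have 2: "\<alpha> * (\<mu>^2 / 4) = \<mu>^4 / (8 * Lm)" unfolding alpha_def using Lm_pos
        by (simp add: field_simps power2_eq_square power4_eq_xxxx)
      have 3: "\<alpha> * (- (\<mu>^2 / 2) * norm (d k) ^ 2) + \<alpha> * (\<mu>^2 / 4) * norm (d k) ^ 2 = - (\<alpha> * (\<mu>^2 / 4)) * norm (d k) ^ 2"
        by (simp add: algebra_simps)
      show ?thesis unfolding 1 unfolding 3 unfolding 2 ..
    qed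
    finally have A: "merit F (z k + \<alpha> *\<^sub>R d k) - merit F (z k) \<le> - (\<mu>^4 / (8 * Lm)) * (norm (d k))^2" .
    have "merit F (z (Suc k)) \<le> merit F (z k + \<alpha> *\<^sub>R d k)" unfolding zS by auto
    then show ?thesis using A by linarith
  qed
  have P: "merit F (z k) \<le> merit F (z 0)" for k
  proof (induction k)
    case 0 then show ?case by simp
  next
    case (Suc k)
    have "- (\<mu>^4 / (8 * Lm)) * (norm (d k))^2 \<le> 0" using Lm_pos by simp
    then show ?case using step[OF Suc] Suc by linarith
  qed
  show ?thesis using step P unfolding F_def by blast
qed

end
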